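(* There exists an absolute constant $C>0$ such that for all integers $1\le s\le d$, all $\sigma>0$, any $\boldsymbol\theta\in B_0(s,d)$, any $\boldsymbol\Sigma$ satisfying Assumption $(\varepsilon^*1)$ and any $z\in\mathbb R$, \[ \mathbf E_{\boldsymbol\theta,\boldsymbol\Sigma}\left[\left(\frac{\hat\varphi_d(z)}{e^{-z^2\sigma^2/2}}-1\right)^2\right]\le C\left(\frac{s^2}{d^2}+\frac{\|\tilde{\boldsymbol\Sigma}\|_F^2}{d^2}\Big(\frac{s}{\|\tilde{\boldsymbol\Sigma}\|_F}\vee1\Big)e^{z^2\sigma^2}\right). \] Furthermore, if $s\le d/8$, then for any $z\in\mathbb R$, \[ \mathbf P_{\boldsymbol\theta,\boldsymbol\Sigma}\left[\tfrac12e^{-z^2\sigma^2/2}\le\hat\varphi_d(z)\le\tfrac32e^{-z^2\sigma^2/2}\right]\ge1-C\frac{\|\tilde{\boldsymbol\Sigma}\|_F^2}{d^2}\Big(\frac{s}{\|\tilde{\boldsymbol\Sigma}\|_F}\vee1\Big)e^{z^2\sigma^2}. \]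
   Context: Model: one observes $\boldsymbol Y=\boldsymbol\theta+\sigma\boldsymbol\varepsilon\in\mathbb R^d$, $\boldsymbol\varepsilon\sim\mathcal N(\boldsymbol0,\boldsymbol\Sigma)$, $\boldsymbol\Sigma$ a covariance matrix with known diagonal entries $\sigma_i^2$, $\sigma>0$. $B_0(s,d)=\{\boldsymbol\theta:\|\boldsymbol\theta\|_0\le s\}$. Assumption $(\varepsilon^*1)$: $\min_i\sigma_i^2\ge c_*$ for a constant $c_*>0$. $\tilde Y_i=Y_i/\sigma_i$, $\tilde{\boldsymbol\Sigma}_{ij}=\boldsymbol\Sigma_{ij}/(\sigma_i\sigma_j)$, and $\hat\varphi_d(u)=\frac1d\sum_{i=1}^d\cos(u\tilde Y_i)$. *)

theory Defs
  imports "HOL-Probability.Probability"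
begin

text \<open>Noise model: \<epsilon> = A g with g a vector of d i.i.d. standard Gaussians, so that
  \<epsilon> ~ N(0, \<Sigma>) with \<Sigma> = A A^T.  Every covariance (PSD) matrix arises this way.\<close>

definition gauss_space :: "nat \<Rightarrow> (nat \<Rightarrow> real) measure" where
  "gauss_space d = PiM {..<d} (\<lambda>_. density lborel std_normal_density)"

definition cov_of :: "nat \<Rightarrow> (nat \<Rightarrow> nat \<Rightarrow> real) \<Rightarrow> nat \<Rightarrow> nat \<Rightarrow> real" where
  "cov_of d A i j = (\<Sum>k<d. A i k * A j k)"

definition noise :: "nat \<Rightarrow> (nat \<Rightarrow> nat \<Rightarrow> real) \<Rightarrow> (nat \<Rightarrow> real) \<Rightarrow> nat \<Rightarrow> real" where
  "noise d A g i = (\<Sum>k<d. A i k * g k)"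

definition obs :: "nat \<Rightarrow> (nat \<Rightarrow> real) \<Rightarrow> real \<Rightarrow> (nat \<Rightarrow> nat \<Rightarrow> real) \<Rightarrow> (nat \<Rightarrow> real) \<Rightarrow> nat \<Rightarrow> real" where
  "obs d \<theta> \<sigma> A g i = \<theta> i + \<sigma> * noise d A g i"

definition sd_i :: "nat \<Rightarrow> (nat \<Rightarrow> nat \<Rightarrow> real) \<Rightarrow> nat \<Rightarrow> real" where
  "sd_i d A i = sqrt (cov_of d A i i)"

definition cov_tilde :: "nat \<Rightarrow> (nat \<Rightarrow> nat \<Rightarrow> real) \<Rightarrow> nat \<Rightarrow> nat \<Rightarrow> real" where
  "cov_tilde d A i j = cov_of d A i j / (sd_i d A i * sd_i d A j)"

definition frob_tilde :: "nat \<Rightarrow> (nat \<Rightarrow> nat \<Rightarrow> real) \<Rightarrow> real" where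
  "frob_tilde d A = sqrt (\<Sum>i<d. \<Sum>j<d. (cov_tilde d A i j)\<^sup>2)"

definition phi_hat :: "nat \<Rightarrow> (nat \<Rightarrow> real) \<Rightarrow> real \<Rightarrow> (nat \<Rightarrow> nat \<Rightarrow> real) \<Rightarrow> real \<Rightarrow> (nat \<Rightarrow> real) \<Rightarrow> real" where
  "phi_hat d \<theta> \<sigma> A u g = (1 / real d) * (\<Sum>i<d. cos (u * (obs d \<theta> \<sigma> A g i / sd_i d A i)))"

definition B0 :: "nat \<Rightarrow> nat \<Rightarrow> (nat \<Rightarrow> real) set" where
  "B0 s d = {\<theta>. card {i \<in> {..<d}. \<theta> i \<noteq> 0} \<le> s}"

end

theory Submission imports Defs "HOL-Probability.Characteristic_Functions" begin


lemma ps_normal: "prob_space std_normal_distribution"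
  using real_dist_normal_dist real_distribution_def by blast

lemma ps_gauss: "prob_space (gauss_space d)"
  unfolding gauss_space_def by (rule prob_space_PiM) (rule ps_normal)

lemma integrable_gauss_iexp:
  "integrable (gauss_space d) (\<lambda>g. iexp (a + (\<Sum>k<d. w k * g k)))"
  unfolding gauss_space_def
  by (rule prob_space.integrable_iexp[OF ps_gauss[unfolded gauss_space_def]]) auto

lemma iexp_char_gauss:
  "(\<integral>g. iexp (a + (\<Sum>k<d. w k * g k)) \<partial>gauss_space d) = iexp a * complex_of_real (exp (-(\<Sum>k<d. (w k)\<^sup>2)/2))"
proof -
  interpret P: product_prob_space "\<lambda>_. std_normal_distribution"
    by (rule product_prob_spaceI) (rule ps_normal)
  have e: "iexp (a + (\<Sum>k<d. w k * g k)) = iexp a * (\<Prod>k<d. iexp (w k * g k))" for g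
    by (simp add: distrib_left sum_distrib_left exp_add exp_sum)
  have "(\<integral>g. (\<Prod>k<d. iexp (w k * g k)) \<partial>gauss_space d) = (\<Prod>k<d. char std_normal_distribution (w k))"
  proof -
    have int: "integrable std_normal_distribution (\<lambda>x. iexp (w k * x))" for k
      by (rule prob_space.integrable_iexp[OF ps_normal]) auto
    show ?thesis
      using P.product_integral_prod[of "{..<d}" "\<lambda>k x. iexp (w k * x)"] int by (simp add: gauss_space_def char_def)
  qed
  also have "\<dots> = (\<Prod>k<d. complex_of_real (exp (- (w k)\<^sup>2 / 2)))"
    by (simp add: char_std_normal_distribution)
  also have "\<dots> = complex_of_real (exp (-(\<Sum>k<d. (w k)\<^sup>2)/2))"
    by (simp add: exp_sum sum_divide_distrib sum_negf[symmetric] of_real_prod[symmetric] del: of_real_prod)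
  finally have X: "(\<integral>g. (\<Prod>k<d. iexp (w k * g k)) \<partial>gauss_space d) = complex_of_real (exp (-(\<Sum>k<d. (w k)\<^sup>2)/2))" .
  show ?thesis by (simp only: e integral_mult_right_zero X)
qed

lemma cos_char_gauss:
  "(\<integral>g. cos (a + (\<Sum>k<d. w k * g k)) \<partial>gauss_space d) = cos a * exp (-(\<Sum>k<d. (w k)\<^sup>2)/2)"
proof -
  have "cos y = Re (iexp y)" for y by (simp add: cos_exp_eq Re_exp)
  hence "(\<integral>g. cos (a + (\<Sum>k<d. w k * g k)) \<partial>gauss_space d)
     = (\<integral>g. Re (iexp (a + (\<Sum>k<d. w k * g k))) \<partial>gauss_space d)" by (simp only:)
  also have "\<dots> = Re (\<integral>g. iexp (a + (\<Sum>k<d. w k * g k)) \<partial>gauss_space d)"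
    by (rule integral_Re) (rule integrable_gauss_iexp)
  also have "\<dots> = cos a * exp (-(\<Sum>k<d. (w k)\<^sup>2)/2)"
    unfolding iexp_char_gauss by (simp add: Re_exp)
  finally show ?thesis .
qed


lemma sinh_scale:
  fixes r y :: real assumes "0 \<le> r" "r \<le> 1" "0 \<le> y"
  shows "sinh (r*y) \<le> r * sinh y"
proof -
  let ?f = "\<lambda>t. r * sinh t - sinh (r*t)"
  have "?f 0 \<le> ?f y"
  proof (rule DERIV_nonneg_imp_increasing_open[OF assms(3)])
    fix t :: real assume t: "0 < t" "t < y"
    have "cosh (r*t) \<le> cosh t"
      using t assms by (subst cosh_real_nonneg_le_iff) (auto simp: mult_left_le_one_le)
    hence "r * cosh t - cosh (r*t) * r \<ge> 0" using assms
      by (metis diff_ge_0_iff_ge mult.commute mult_left_mono)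
    moreover have "DERIV ?f t :> r * cosh t - cosh (r*t) * r"
      by (auto intro!: derivative_eq_intros)
    ultimately show "\<exists>y. DERIV ?f t :> y \<and> 0 \<le> y" by blast
  next
    show "continuous_on {0..y} ?f" by (intro continuous_intros)
  qed
  thus ?thesis by simp
qed

lemma cosh_2sinh: "cosh (2*x::real) = 1 + 2 * (sinh x)\<^sup>2"
  using cosh_double[of x] cosh_square_eq[of x] by simp

lemma cosh_scale:
  fixes \<rho> T :: real assumes "\<bar>\<rho>\<bar> \<le> 1" "0 \<le> T"
  shows "cosh (\<rho>*T) - 1 \<le> \<rho>\<^sup>2 * (cosh T - 1)"
proof -
  have a: "cosh (\<rho>*T) = cosh (\<bar>\<rho>\<bar>*T)"
    by (metis abs_mult abs_of_nonneg assms(2) cosh_real_abs)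
  have "cosh (\<bar>\<rho>\<bar>*T) = 1 + 2 * (sinh (\<bar>\<rho>\<bar>*(T/2)))\<^sup>2"
    using cosh_2sinh[of "\<bar>\<rho>\<bar>*(T/2)"] by simp
  moreover have "cosh T = 1 + 2 * (sinh (T/2))\<^sup>2"
    using cosh_2sinh[of "T/2"] by simp
  moreover have "(sinh (\<bar>\<rho>\<bar>*(T/2)))\<^sup>2 \<le> (\<bar>\<rho>\<bar> * sinh (T/2))\<^sup>2"
    using sinh_scale[of "\<bar>\<rho>\<bar>" "T/2"] assms
    by (intro power_mono) (auto simp: zero_le_mult_iff)
  ultimately show ?thesis using a by (simp add: power_mult_distrib)
qed

lemma sinh_abs_scale:
  fixes \<rho> T :: real assumes "\<bar>\<rho>\<bar> \<le> 1" "0 \<le> T"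
  shows "\<bar>sinh (\<rho>*T)\<bar> \<le> \<bar>\<rho>\<bar> * sinh T"
proof -
  have "\<bar>sinh (\<rho>*T)\<bar> = sinh (\<bar>\<rho>\<bar>*T)"
    by (metis abs_mult abs_of_nonneg assms(2) sinh_real_abs)
  also have "\<dots> \<le> \<bar>\<rho>\<bar> * sinh T" using sinh_scale assms by simp
  finally show ?thesis .
qed

lemma pair_bound:
  fixes \<rho> T a b :: real assumes "\<bar>\<rho>\<bar> \<le> 1" "0 \<le> T"
  shows "(cos (a+b) * exp (-(\<rho>*T)) + cos (a-b) * exp (\<rho>*T))/2 - cos a * cos b
         \<le> \<rho>\<^sup>2 * exp T + \<bar>sin a\<bar> * \<bar>sin b\<bar> * \<bar>\<rho>\<bar> * exp T"
proof -
  have eq: "(cos (a+b) * exp (-(\<rho>*T)) + cos (a-b) * exp (\<rho>*T))/2 - cos a * cos b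
     = cos a * cos b * (cosh (\<rho>*T) - 1) + sin a * sin b * sinh (\<rho>*T)"
    by (simp add: cos_add cos_diff cosh_field_def sinh_field_def algebra_simps add_divide_distrib diff_divide_distrib)
  have c0: "0 \<le> cosh (\<rho>*T) - 1" using cosh_real_ge_1 by simp
  have s0: "0 \<le> sinh T" using assms(2) by simp
  have cT: "cosh T - 1 \<le> exp T" using cosh_plus_sinh[of T] s0 by linarith
  have sT: "sinh T \<le> exp T" using cosh_plus_sinh[of T] cosh_real_pos[of T] by linarith
  have "cos a * cos b * (cosh (\<rho>*T) - 1) \<le> \<bar>cos a * cos b\<bar> * (cosh (\<rho>*T) - 1)"
    using c0 by (metis abs_ge_self mult_right_mono)
  also have "\<dots> \<le> 1 * (cosh (\<rho>*T) - 1)"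
    using c0 by (intro mult_right_mono) (auto simp: abs_mult intro: mult_le_one)
  also have "\<dots> \<le> \<rho>\<^sup>2 * (cosh T - 1)" using cosh_scale[OF assms] by simp
  also have "\<dots> \<le> \<rho>\<^sup>2 * exp T" using cT by (intro mult_left_mono) auto
  finally have 1: "cos a * cos b * (cosh (\<rho>*T) - 1) \<le> \<rho>\<^sup>2 * exp T" .
  have "sin a * sin b * sinh (\<rho>*T) \<le> \<bar>sin a\<bar> * \<bar>sin b\<bar> * \<bar>sinh (\<rho>*T)\<bar>"
    by (metis abs_ge_self abs_mult)
  also have "\<dots> \<le> \<bar>sin a\<bar> * \<bar>sin b\<bar> * (\<bar>\<rho>\<bar> * exp T)"
    using sinh_abs_scale[OF assms] mult_left_mono[OF sT, of "\<bar>\<rho>\<bar>"]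
    by (intro mult_left_mono) auto
  finally have 2: "sin a * sin b * sinh (\<rho>*T) \<le> \<bar>sin a\<bar> * \<bar>sin b\<bar> * \<bar>\<rho>\<bar> * exp T"
    by (simp add: mult.assoc)
  show ?thesis using 1 2 eq by linarith
qed


lemma integrable_gauss_cos:
  "integrable (gauss_space d) (\<lambda>g. cos (a + (\<Sum>k<d. w k * g k)))"
proof -
  interpret prob_space "gauss_space d" by (rule ps_gauss)
  show ?thesis
    by (rule integrable_const_bound[where B=1]) (auto simp: gauss_space_def)
qed

lemma pair_pointwise:
  fixes E :: real assumes "E \<noteq> 0"
  shows "(cos a / E - b) * (cos c / E - b') =
     cos (a + c) / (2*E^2) + cos (a - c) / (2*E^2) - b' / E * cos a - b / E * cos c + b * b'"
  using assms by (simp add: cos_times_cos field_simps power2_eq_square)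

lemma second_moment:
  fixes u b :: "nat \<Rightarrow> real" and w \<rho> :: "nat \<Rightarrow> nat \<Rightarrow> real" and T :: real
  assumes nT: "\<And>i. i<d \<Longrightarrow> (\<Sum>k<d. (w i k)\<^sup>2) = T"
      and ip: "\<And>i j. i<d \<Longrightarrow> j<d \<Longrightarrow> (\<Sum>k<d. w i k * w j k) = T * \<rho> i j"
  shows "(\<integral>g. ((1/real d) * (\<Sum>i<d. cos (u i + (\<Sum>k<d. w i k * g k))) / exp (-T/2) - (1/real d) * (\<Sum>i<d. b i))\<^sup>2 \<partial>gauss_space d)
     = (1/(real d)\<^sup>2) * (\<Sum>i<d. \<Sum>j<d. (cos (u i + u j) * exp (-(\<rho> i j * T)) + cos (u i - u j) * exp (\<rho> i j * T))/2
            - b j * cos (u i) - b i * cos (u j) + b i * b j)"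
proof -
  interpret prob_space "gauss_space d" by (rule ps_gauss)
  define E where "E = exp (-T/2)"
  have E0: "E \<noteq> 0" by (simp add: E_def)
  have E2: "E^2 = exp (-T)" by (simp add: E_def power2_eq_square exp_add[symmetric])
  define X where "X i g = cos (u i + (\<Sum>k<d. w i k * g k))" for i g
  define F where "F i j g = cos ((u i + u j) + (\<Sum>k<d. (w i k + w j k) * g k))/(2*E^2)
      + cos ((u i - u j) + (\<Sum>k<d. (w i k - w j k) * g k))/(2*E^2)
      - b j / E * X i g - b i / E * X j g + b i * b j" for i j g
  have intF: "integrable (gauss_space d) (F i j)" for i j
    unfolding F_def X_def
    by (intro Bochner_Integration.integrable_add Bochner_Integration.integrable_diff
        Bochner_Integration.integrable_divide_zero Bochner_Integration.integrable_mult_right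
        integrable_gauss_cos) simp
  have pw: "((1/real d) * (\<Sum>i<d. X i g) / E - (1/real d) * (\<Sum>i<d. b i))\<^sup>2
        = (1/(real d)\<^sup>2) * (\<Sum>i<d. \<Sum>j<d. F i j g)" for g
  proof -
    have "(1/real d) * (\<Sum>i<d. X i g) / E - (1/real d) * (\<Sum>i<d. b i) = (1/real d) * (\<Sum>i<d. X i g / E - b i)"
      by (simp add: sum_subtractf sum_divide_distrib algebra_simps)
    hence "((1/real d) * (\<Sum>i<d. X i g) / E - (1/real d) * (\<Sum>i<d. b i))\<^sup>2
        = (1/(real d)\<^sup>2) * ((\<Sum>i<d. X i g / E - b i) * (\<Sum>j<d. X j g / E - b j))"
      by (simp add: power2_eq_square)
    also have "\<dots> = (1/(real d)\<^sup>2) * (\<Sum>i<d. \<Sum>j<d. (X i g / E - b i) * (X j g / E - b j))"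
      by (simp add: sum_product)
    also have "\<dots> = (1/(real d)\<^sup>2) * (\<Sum>i<d. \<Sum>j<d. F i j g)"
    proof -
      have "(X i g / E - b i) * (X j g / E - b j) = F i j g" for i j
      proof -
        have s1: "(u i + (\<Sum>k<d. w i k * g k)) + (u j + (\<Sum>k<d. w j k * g k)) = (u i + u j) + (\<Sum>k<d. (w i k + w j k) * g k)"
          by (simp add: sum.distrib algebra_simps)
        have s2: "(u i + (\<Sum>k<d. w i k * g k)) - (u j + (\<Sum>k<d. w j k * g k)) = (u i - u j) + (\<Sum>k<d. (w i k - w j k) * g k)"
          by (simp add: sum_subtractf algebra_simps)
        show ?thesis unfolding X_def F_def pair_pointwise[OF E0] s1 s2 by simp
      qed
      thus ?thesis by simp
    qed
    finally show ?thesis .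
  qed
  have iF: "(\<integral>g. F i j g \<partial>gauss_space d) = (cos (u i + u j) * exp (-(\<rho> i j * T)) + cos (u i - u j) * exp (\<rho> i j * T))/2
            - b j * cos (u i) - b i * cos (u j) + b i * b j" if ij: "i<d" "j<d" for i j
  proof -
    have sp: "(\<Sum>k<d. (w i k + w j k)\<^sup>2) = 2*T + 2*(T * \<rho> i j)"
      using nT[OF ij(1)] nT[OF ij(2)] ip[OF ij]
      by (simp add: power2_sum sum.distrib sum_distrib_left[symmetric] mult.assoc)
    have sm: "(\<Sum>k<d. (w i k - w j k)\<^sup>2) = 2*T - 2*(T * \<rho> i j)"
      using nT[OF ij(1)] nT[OF ij(2)] ip[OF ij]
      by (simp add: power2_diff sum_subtractf sum.distrib sum_distrib_left[symmetric] mult.assoc)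
    have e1: "exp (- (2*T + 2*(T * \<rho> i j)) / 2) / (2*E^2) = exp (-(\<rho> i j * T)) / 2"
      unfolding E2 by (simp add: exp_diff[symmetric] algebra_simps add_divide_distrib diff_divide_distrib)
    have e2: "exp (- (2*T - 2*(T * \<rho> i j)) / 2) / (2*E^2) = exp (\<rho> i j * T) / 2"
      unfolding E2 by (simp add: exp_diff[symmetric] algebra_simps add_divide_distrib diff_divide_distrib)
    have e3: "exp (- T / 2) / E = 1" by (simp add: E_def)
    have "(\<integral>g. F i j g \<partial>gauss_space d) =
        cos (u i + u j) * exp (-(\<Sum>k<d. (w i k + w j k)\<^sup>2)/2) / (2*E^2)
      + cos (u i - u j) * exp (-(\<Sum>k<d. (w i k - w j k)\<^sup>2)/2) / (2*E^2)
      - b j / E * (cos (u i) * exp (-(\<Sum>k<d. (w i k)\<^sup>2)/2))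
      - b i / E * (cos (u j) * exp (-(\<Sum>k<d. (w j k)\<^sup>2)/2)) + b i * b j"
      unfolding F_def X_def
      by (simp add: Bochner_Integration.integral_add Bochner_Integration.integral_diff integrable_gauss_cos cos_char_gauss
             Bochner_Integration.integrable_add Bochner_Integration.integrable_diff Bochner_Integration.integral_mult_right_zero prob_space)
    also have "\<dots> = (cos (u i + u j) * exp (-(\<rho> i j * T)) + cos (u i - u j) * exp (\<rho> i j * T))/2
            - b j * cos (u i) - b i * cos (u j) + b i * b j"
      unfolding sp sm nT[OF ij(1)] nT[OF ij(2)]
      using e1 e2 e3 by (simp add: field_simps)
    finally show ?thesis .
  qed
  have "(\<integral>g. ((1/real d) * (\<Sum>i<d. X i g) / E - (1/real d) * (\<Sum>i<d. b i))\<^sup>2 \<partial>gauss_space d)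
      = (1/(real d)\<^sup>2) * (\<Sum>i<d. \<Sum>j<d. (\<integral>g. F i j g \<partial>gauss_space d))"
    unfolding pw
    by (simp add: Bochner_Integration.integral_sum intF Bochner_Integration.integrable_sum)
  also have "\<dots> = (1/(real d)\<^sup>2) * (\<Sum>i<d. \<Sum>j<d. (cos (u i + u j) * exp (-(\<rho> i j * T)) + cos (u i - u j) * exp (\<rho> i j * T))/2
            - b j * cos (u i) - b i * cos (u j) + b i * b j)"
    by (simp add: iF)
  finally show ?thesis unfolding X_def E_def .
qed



lemma phi_hat_eq:
  "phi_hat d \<theta> \<sigma> A z g = (1/real d) * (\<Sum>i<d. cos (z * \<theta> i / sd_i d A i
       + (\<Sum>k<d. (z * \<sigma> * A i k / sd_i d A i) * g k)))"
proof -
  have "z * (obs d \<theta> \<sigma> A g i / sd_i d A i) = z * \<theta> i / sd_i d A i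
       + (\<Sum>k<d. (z * \<sigma> * A i k / sd_i d A i) * g k)" for i
    unfolding obs_def noise_def
    by (simp add: add_divide_distrib sum_distrib_left sum_divide_distrib algebra_simps)
  thus ?thesis unfolding phi_hat_def by simp
qed

lemma phi_hat_meas: "phi_hat d \<theta> \<sigma> A z \<in> borel_measurable (gauss_space d)"
  unfolding phi_hat_eq[abs_def] gauss_space_def by measurable

lemma cov_cs: "(cov_of d A i j)\<^sup>2 \<le> cov_of d A i i * cov_of d A j j"
  unfolding cov_of_def using Cauchy_Schwarz_ineq_sum[of "\<lambda>k. A i k" "\<lambda>k. A j k" "{..<d}"]
  by (simp add: power2_eq_square)

lemma rho_le1:
  assumes "0 < cov_of d A i i" "0 < cov_of d A j j"
  shows "\<bar>cov_tilde d A i j\<bar> \<le> 1"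
proof -
  have "(cov_tilde d A i j)\<^sup>2 = (cov_of d A i j)\<^sup>2 / (cov_of d A i i * cov_of d A j j)"
    using assms unfolding cov_tilde_def sd_i_def
    by (simp add: power_divide power_mult_distrib real_sqrt_mult[symmetric])
  also have "\<dots> \<le> 1" using cov_cs[of d A i j] assms by simp
  finally show ?thesis by (simp add: abs_square_le_1)
qed

lemma sparse_sums:
  fixes u :: "nat \<Rightarrow> real" and s :: nat
  assumes N: "card {i\<in>{..<d}. u i \<noteq> 0} \<le> s"
  shows "(\<Sum>i<d. (sin (u i))\<^sup>2) \<le> s" and "0 \<le> (\<Sum>i<d. 1 - cos (u i))" and "(\<Sum>i<d. 1 - cos (u i)) \<le> 2 * s"
proof -
  let ?N = "{i\<in>{..<d}. u i \<noteq> 0}"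
  have "(\<Sum>i<d. (sin (u i))\<^sup>2) = (\<Sum>i\<in>?N. (sin (u i))\<^sup>2)"
    by (rule sum.mono_neutral_right) auto
  also have "\<dots> \<le> (\<Sum>i\<in>?N. 1)" by (intro sum_mono) (simp add: abs_square_le_1)
  also have "\<dots> \<le> s" using N by simp
  finally show "(\<Sum>i<d. (sin (u i))\<^sup>2) \<le> s" .
  show "0 \<le> (\<Sum>i<d. 1 - cos (u i))" by (intro sum_nonneg) simp
  have "(\<Sum>i<d. 1 - cos (u i)) = (\<Sum>i\<in>?N. 1 - cos (u i))"
    by (rule sum.mono_neutral_right) auto
  also have "\<dots> \<le> (\<Sum>i\<in>?N. 2)" by (intro sum_mono) (smt (verit) cos_ge_minus_one)
  also have "\<dots> \<le> 2 * s" using N by simp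
  finally show "(\<Sum>i<d. 1 - cos (u i)) \<le> 2 * s" .
qed

lemma cross_bound:
  fixes u :: "nat \<Rightarrow> real" and \<rho> :: "nat \<Rightarrow> nat \<Rightarrow> real" and s :: nat
  assumes N: "card {i\<in>{..<d}. u i \<noteq> 0} \<le> s"
  shows "(\<Sum>i<d. \<Sum>j<d. \<bar>sin (u i)\<bar> * \<bar>sin (u j)\<bar> * \<bar>\<rho> i j\<bar>)
      \<le> s * sqrt (\<Sum>i<d. \<Sum>j<d. (\<rho> i j)\<^sup>2)"
proof -
  let ?P = "{..<d} \<times> {..<d}"
  have eq1: "(\<Sum>i<d. \<Sum>j<d. \<bar>sin (u i)\<bar> * \<bar>sin (u j)\<bar> * \<bar>\<rho> i j\<bar>)
     = (\<Sum>p\<in>?P. (\<bar>sin (u (fst p))\<bar> * \<bar>sin (u (snd p))\<bar>) * \<bar>\<rho> (fst p) (snd p)\<bar>)"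
    by (simp add: sum.cartesian_product case_prod_beta)
  have eq2: "(\<Sum>p\<in>?P. (\<bar>sin (u (fst p))\<bar> * \<bar>sin (u (snd p))\<bar>)\<^sup>2) = (\<Sum>i<d. (sin (u i))\<^sup>2)\<^sup>2"
    by (simp add: sum.cartesian_product[symmetric] power2_eq_square sum_product power_mult_distrib
        abs_mult_self_eq algebra_simps) (simp add: sum.cartesian_product case_prod_beta)
  have eq3: "(\<Sum>p\<in>?P. \<bar>\<rho> (fst p) (snd p)\<bar>\<^sup>2) = (\<Sum>i<d. \<Sum>j<d. (\<rho> i j)\<^sup>2)"
    by (simp add: sum.cartesian_product case_prod_beta)
  let ?L = "(\<Sum>i<d. \<Sum>j<d. \<bar>sin (u i)\<bar> * \<bar>sin (u j)\<bar> * \<bar>\<rho> i j\<bar>)"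
  let ?F = "sqrt (\<Sum>i<d. \<Sum>j<d. (\<rho> i j)\<^sup>2)"
  have Fnn: "0 \<le> (\<Sum>i<d. \<Sum>j<d. (\<rho> i j)\<^sup>2)" by (intro sum_nonneg) auto
  have "?L\<^sup>2 \<le> (\<Sum>i<d. (sin (u i))\<^sup>2)\<^sup>2 * (\<Sum>i<d. \<Sum>j<d. (\<rho> i j)\<^sup>2)"
    using Cauchy_Schwarz_ineq_sum[of "\<lambda>p. \<bar>sin (u (fst p))\<bar> * \<bar>sin (u (snd p))\<bar>" "\<lambda>p. \<bar>\<rho> (fst p) (snd p)\<bar>" ?P]
    unfolding eq1 eq2 eq3 .
  also have "\<dots> \<le> (real s)\<^sup>2 * (\<Sum>i<d. \<Sum>j<d. (\<rho> i j)\<^sup>2)"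
    using sparse_sums(1)[OF N] Fnn
    by (intro mult_right_mono power_mono) (auto intro: sum_nonneg)
  also have "\<dots> = (s * ?F)\<^sup>2" using Fnn by (simp add: power_mult_distrib)
  finally have "?L\<^sup>2 \<le> (s * ?F)\<^sup>2" .
  thus ?thesis by (rule power2_le_imp_le) (use Fnn in simp)
qed

lemma var_bound:
  fixes u :: "nat \<Rightarrow> real" and \<rho> :: "nat \<Rightarrow> nat \<Rightarrow> real" and s :: nat and T :: real
  assumes N: "card {i\<in>{..<d}. u i \<noteq> 0} \<le> s"
    and rho: "\<And>i j. i<d \<Longrightarrow> j<d \<Longrightarrow> \<bar>\<rho> i j\<bar> \<le> 1" and T: "0 \<le> T"
  shows "(\<Sum>i<d. \<Sum>j<d. (cos (u i + u j) * exp (-(\<rho> i j * T)) + cos (u i - u j) * exp (\<rho> i j * T))/2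
            - cos (u i) * cos (u j))
     \<le> ((sqrt (\<Sum>i<d. \<Sum>j<d. (\<rho> i j)\<^sup>2))\<^sup>2 + s * sqrt (\<Sum>i<d. \<Sum>j<d. (\<rho> i j)\<^sup>2)) * exp T"
proof -
  have Fnn: "0 \<le> (\<Sum>i<d. \<Sum>j<d. (\<rho> i j)\<^sup>2)" by (intro sum_nonneg) auto
  have "(\<Sum>i<d. \<Sum>j<d. (cos (u i + u j) * exp (-(\<rho> i j * T)) + cos (u i - u j) * exp (\<rho> i j * T))/2
            - cos (u i) * cos (u j))
     \<le> (\<Sum>i<d. \<Sum>j<d. (\<rho> i j)\<^sup>2 * exp T + \<bar>sin (u i)\<bar> * \<bar>sin (u j)\<bar> * \<bar>\<rho> i j\<bar> * exp T)"
    by (intro sum_mono pair_bound[OF _ T]) (auto intro: rho)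
  also have "\<dots> = (\<Sum>i<d. \<Sum>j<d. (\<rho> i j)\<^sup>2) * exp T
       + (\<Sum>i<d. \<Sum>j<d. \<bar>sin (u i)\<bar> * \<bar>sin (u j)\<bar> * \<bar>\<rho> i j\<bar>) * exp T"
    by (simp add: sum.distrib sum_distrib_right)
  also have "\<dots> \<le> (\<Sum>i<d. \<Sum>j<d. (\<rho> i j)\<^sup>2) * exp T + (s * sqrt (\<Sum>i<d. \<Sum>j<d. (\<rho> i j)\<^sup>2)) * exp T"
    using cross_bound[OF N, of \<rho>] by (intro add_left_mono mult_right_mono) auto
  finally show ?thesis using Fnn by (simp add: algebra_simps)
qed

lemma Fmax:
  fixes F s :: real assumes "0 \<le> F" "0 \<le> s"
  shows "F\<^sup>2 + s * F \<le> 2 * (F\<^sup>2 * max (s / F) 1)"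
proof (cases "F = 0")
  case True thus ?thesis by simp
next
  case False
  hence "s * F = F\<^sup>2 * (s / F)" by (simp add: power2_eq_square)
  also have "\<dots> \<le> F\<^sup>2 * max (s / F) 1" by (intro mult_left_mono) auto
  finally have "s * F \<le> F\<^sup>2 * max (s / F) 1" .
  moreover have "F\<^sup>2 \<le> F\<^sup>2 * max (s / F) 1" by (simp add: mult_le_cancel_left1)
  ultimately show ?thesis by simp
qed

lemma avg_cos_bound:
  assumes "d > 0"
  shows "\<bar>(1/real d) * (\<Sum>i<d. cos (f i))\<bar> \<le> 1"
proof -
  have "\<bar>\<Sum>i<d. cos (f i)\<bar> \<le> (\<Sum>i<d. \<bar>cos (f i)\<bar>)" by (rule sum_abs)
  also have "\<dots> \<le> real d" using sum_bounded_above[of "{..<d}" "\<lambda>i. \<bar>cos (f i)\<bar>" 1] by simp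
  finally show ?thesis using assms by (simp add: abs_mult field_simps)
qed



lemma main_bounds:
  fixes d s :: nat and \<sigma> :: real and \<theta> :: "nat \<Rightarrow> real" and A :: "nat \<Rightarrow> nat \<Rightarrow> real" and c z :: real
  assumes s1: "1 \<le> s" and sd: "s \<le> d" and sig: "\<sigma> > 0" and th: "\<theta> \<in> B0 s d" and c0: "c > 0"
    and cov: "\<forall>i<d. cov_of d A i i \<ge> c"
  shows "((\<integral>g. (phi_hat d \<theta> \<sigma> A z g / exp (- z\<^sup>2 * \<sigma>\<^sup>2 / 2) - 1)\<^sup>2 \<partial>gauss_space d)
        \<le> 32 * ((real s)\<^sup>2 / (real d)\<^sup>2
              + (frob_tilde d A)\<^sup>2 / (real d)\<^sup>2 * max (real s / frob_tilde d A) 1 * exp (z\<^sup>2 * \<sigma>\<^sup>2))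
      \<and> (real s \<le> real d / 8 \<longrightarrow>
         measure (gauss_space d)
           {g \<in> space (gauss_space d).
              1/2 * exp (- z\<^sup>2 * \<sigma>\<^sup>2 / 2) \<le> phi_hat d \<theta> \<sigma> A z g
              \<and> phi_hat d \<theta> \<sigma> A z g \<le> 3/2 * exp (- z\<^sup>2 * \<sigma>\<^sup>2 / 2)}
         \<ge> 1 - 32 * (frob_tilde d A)\<^sup>2 / (real d)\<^sup>2 * max (real s / frob_tilde d A) 1 * exp (z\<^sup>2 * \<sigma>\<^sup>2)))"
proof -
  interpret prob_space "gauss_space d" by (rule ps_gauss)
  have d0: "d > 0" using s1 sd by simp
  have covpos: "0 < cov_of d A i i" if "i < d" for i using cov c0 that by force
  define T where "T = z\<^sup>2 * \<sigma>\<^sup>2"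
  have T0: "0 \<le> T" by (simp add: T_def)
  define u where "u i = z * \<theta> i / sd_i d A i" for i
  define w where "w i k = z * \<sigma> * A i k / sd_i d A i" for i k
  define \<rho> where "\<rho> = cov_tilde d A"
  define F where "F = frob_tilde d A"
  define E where "E = exp (- T / 2)"
  have E0: "E > 0" by (simp add: E_def)
  have Fdef: "F = sqrt (\<Sum>i<d. \<Sum>j<d. (\<rho> i j)\<^sup>2)" by (simp add: F_def \<rho>_def frob_tilde_def)
  have F0: "0 \<le> F" by (simp add: Fdef sum_nonneg)
  have expE: "exp (- z\<^sup>2 * \<sigma>\<^sup>2 / 2) = E" by (simp add: E_def T_def)
  have sdsq: "(sd_i d A i)\<^sup>2 = cov_of d A i i" if "i<d" for i
    using covpos[OF that] by (simp add: sd_i_def)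
  have sdpos: "sd_i d A i > 0" if "i<d" for i
    using covpos[OF that] by (simp add: sd_i_def)
  have nT: "(\<Sum>k<d. (w i k)\<^sup>2) = T" if "i<d" for i
  proof -
    have "(\<Sum>k<d. (w i k)\<^sup>2) = (z * \<sigma>)\<^sup>2 / (sd_i d A i)\<^sup>2 * cov_of d A i i"
      by (simp add: w_def cov_of_def power_divide power_mult_distrib sum_distrib_left
          sum_divide_distrib power2_eq_square algebra_simps)
    thus ?thesis using sdsq[OF that] covpos[OF that] by (simp add: T_def power_mult_distrib)
  qed
  have ip: "(\<Sum>k<d. w i k * w j k) = T * \<rho> i j" if "i<d" "j<d" for i j
  proof -
    have "(\<Sum>k<d. w i k * w j k) = (z * \<sigma>)\<^sup>2 * (cov_of d A i j / (sd_i d A i * sd_i d A j))"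
      by (simp add: w_def cov_of_def sum_distrib_left sum_divide_distrib power2_eq_square algebra_simps)
    thus ?thesis by (simp add: T_def \<rho>_def cov_tilde_def power_mult_distrib)
  qed
  have rho1: "\<bar>\<rho> i j\<bar> \<le> 1" if "i<d" "j<d" for i j
    unfolding \<rho>_def using rho_le1 covpos that by blast
  have N: "card {i\<in>{..<d}. u i \<noteq> 0} \<le> s"
  proof -
    have "card {i\<in>{..<d}. u i \<noteq> 0} \<le> card {i\<in>{..<d}. \<theta> i \<noteq> 0}"
      by (rule card_mono) (auto simp: u_def)
    thus ?thesis using th by (simp add: B0_def)
  qed
  have phi: "phi_hat d \<theta> \<sigma> A z g = (1/real d) * (\<Sum>i<d. cos (u i + (\<Sum>k<d. w i k * g k)))" for g
    unfolding phi_hat_eq u_def w_def by simp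
  let ?K = "\<lambda>i j. (cos (u i + u j) * exp (-(\<rho> i j * T)) + cos (u i - u j) * exp (\<rho> i j * T))/2"
  have VB: "(\<Sum>i<d. \<Sum>j<d. ?K i j - cos (u i) * cos (u j)) \<le> (F\<^sup>2 + s * F) * exp T"
    unfolding Fdef by (rule var_bound[OF N rho1 T0])
  have FM: "F\<^sup>2 + s * F \<le> 2 * (F\<^sup>2 * max (s / F) 1)" using Fmax F0 by simp
  have eT: "exp (z\<^sup>2 * \<sigma>\<^sup>2) = exp T" by (simp add: T_def)
  have S1: "0 \<le> (\<Sum>i<d. 1 - cos (u i))" and S2: "(\<Sum>i<d. 1 - cos (u i)) \<le> 2 * s"
    using sparse_sums[OF N] by auto
  have P1: "(\<integral>g. (phi_hat d \<theta> \<sigma> A z g / exp (- z\<^sup>2 * \<sigma>\<^sup>2 / 2) - 1)\<^sup>2 \<partial>gauss_space d)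
        \<le> 32 * ((real s)\<^sup>2 / (real d)\<^sup>2
              + (frob_tilde d A)\<^sup>2 / (real d)\<^sup>2 * max (real s / frob_tilde d A) 1 * exp (z\<^sup>2 * \<sigma>\<^sup>2))"
  proof -
    have pw: "(phi_hat d \<theta> \<sigma> A z g / exp (- z\<^sup>2 * \<sigma>\<^sup>2 / 2) - 1)\<^sup>2 =
      ((1/real d) * (\<Sum>i<d. cos (u i + (\<Sum>k<d. w i k * g k))) / exp (-T/2) - (1/real d) * (\<Sum>i<d. (\<lambda>_. 1::real) i))\<^sup>2" for g
      using d0 by (simp add: phi T_def)
    have "(\<integral>g. (phi_hat d \<theta> \<sigma> A z g / exp (- z\<^sup>2 * \<sigma>\<^sup>2 / 2) - 1)\<^sup>2 \<partial>gauss_space d)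
       = (1/(real d)\<^sup>2) * (\<Sum>i<d. \<Sum>j<d. ?K i j - 1 * cos (u i) - 1 * cos (u j) + 1 * 1)"
      unfolding pw by (rule second_moment[OF nT ip])
    also have "\<dots> = (1/(real d)\<^sup>2) * ((\<Sum>i<d. 1 - cos (u i))\<^sup>2 + (\<Sum>i<d. \<Sum>j<d. ?K i j - cos (u i) * cos (u j)))"
    proof -
      have "(\<Sum>i<d. \<Sum>j<d. ?K i j - 1 * cos (u i) - 1 * cos (u j) + 1 * 1)
          = (\<Sum>i<d. \<Sum>j<d. (1 - cos (u i)) * (1 - cos (u j)) + (?K i j - cos (u i) * cos (u j)))"
        by (intro sum.cong refl) (simp add: algebra_simps)
      also have "\<dots> = (\<Sum>i<d. 1 - cos (u i))\<^sup>2 + (\<Sum>i<d. \<Sum>j<d. ?K i j - cos (u i) * cos (u j))"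
        by (simp add: sum.distrib power2_eq_square sum_product)
      finally show ?thesis by simp
    qed
    also have "\<dots> \<le> (1/(real d)\<^sup>2) * ((2 * real s)\<^sup>2 + 2 * (F\<^sup>2 * max (s / F) 1) * exp T)"
    proof -
      have a: "(\<Sum>i<d. 1 - cos (u i))\<^sup>2 \<le> (2 * real s)\<^sup>2" using S1 S2 by (intro power_mono) auto
      have b: "(F\<^sup>2 + s * F) * exp T \<le> 2 * (F\<^sup>2 * max (s / F) 1) * exp T"
        using FM by (intro mult_right_mono) auto
      have "(\<Sum>i<d. 1 - cos (u i))\<^sup>2 + (\<Sum>i<d. \<Sum>j<d. ?K i j - cos (u i) * cos (u j))
          \<le> (2 * real s)\<^sup>2 + 2 * (F\<^sup>2 * max (s / F) 1) * exp T"
        using a b VB by linarith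
      thus ?thesis by (intro mult_left_mono) auto
    qed
    also have "\<dots> \<le> 32 * ((real s)\<^sup>2 / (real d)\<^sup>2 + F\<^sup>2 / (real d)\<^sup>2 * max (real s / F) 1 * exp T)"
    proof -
      define a where "a = (real s)\<^sup>2 / (real d)\<^sup>2"
      define b where "b = F\<^sup>2 / (real d)\<^sup>2 * max (real s / F) 1 * exp T"
      have a0: "0 \<le> a" by (simp add: a_def)
      have b0: "0 \<le> b" unfolding b_def by (intro mult_nonneg_nonneg) auto
      have e: "(1/(real d)\<^sup>2) * ((2 * real s)\<^sup>2 + 2 * (F\<^sup>2 * max (s / F) 1) * exp T) = 4 * a + 2 * b"
        by (simp add: a_def b_def power_mult_distrib field_simps add_divide_distrib)
      hence "(1/(real d)\<^sup>2) * ((2 * real s)\<^sup>2 + 2 * (F\<^sup>2 * max (s / F) 1) * exp T) \<le> 32 * (a + b)"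
        unfolding e using a0 b0 by (simp add: algebra_simps)
      thus ?thesis by (simp add: a_def b_def)
    qed
    finally show ?thesis unfolding F_def eT .
  qed
  have P2: "measure (gauss_space d)
           {g \<in> space (gauss_space d).
              1/2 * exp (- z\<^sup>2 * \<sigma>\<^sup>2 / 2) \<le> phi_hat d \<theta> \<sigma> A z g
              \<and> phi_hat d \<theta> \<sigma> A z g \<le> 3/2 * exp (- z\<^sup>2 * \<sigma>\<^sup>2 / 2)}
         \<ge> 1 - 32 * (frob_tilde d A)\<^sup>2 / (real d)\<^sup>2 * max (real s / frob_tilde d A) 1 * exp (z\<^sup>2 * \<sigma>\<^sup>2)"
    if s8: "real s \<le> real d / 8"
  proof -
    define Z where "Z g = (1/real d) * (\<Sum>i<d. cos (u i + (\<Sum>k<d. w i k * g k))) / exp (-T/2)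
        - (1/real d) * (\<Sum>i<d. cos (u i))" for g
    have Zmeas: "Z \<in> borel_measurable (gauss_space d)"
      unfolding Z_def[abs_def] gauss_space_def by measurable
    have M2: "(\<integral>g. (Z g)\<^sup>2 \<partial>gauss_space d)
       = (1/(real d)\<^sup>2) * (\<Sum>i<d. \<Sum>j<d. ?K i j - cos (u j) * cos (u i) - cos (u i) * cos (u j) + cos (u i) * cos (u j))"
      unfolding Z_def by (rule second_moment[OF nT ip])
    also have "\<dots> = (1/(real d)\<^sup>2) * (\<Sum>i<d. \<Sum>j<d. ?K i j - cos (u i) * cos (u j))"
      by (simp add: algebra_simps)
    also have "\<dots> \<le> (1/(real d)\<^sup>2) * ((F\<^sup>2 + s * F) * exp T)"
      using VB by (intro mult_left_mono) auto
    finally have M2b: "(\<integral>g. (Z g)\<^sup>2 \<partial>gauss_space d) \<le> (1/(real d)\<^sup>2) * ((F\<^sup>2 + s * F) * exp T)" .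
    have Zb: "\<bar>Z g\<bar> \<le> 1 / E + 1" for g
    proof -
      have "\<bar>Z g\<bar> \<le> \<bar>(1/real d) * (\<Sum>i<d. cos (u i + (\<Sum>k<d. w i k * g k)))\<bar> / E
          + \<bar>(1/real d) * (\<Sum>i<d. cos (u i))\<bar>"
        unfolding Z_def E_def[symmetric] using E0
          abs_triangle_ineq4[of "(1/real d) * (\<Sum>i<d. cos (u i + (\<Sum>k<d. w i k * g k))) / E" "(1/real d) * (\<Sum>i<d. cos (u i))"]
        by (simp add: abs_divide)
      also have "\<dots> \<le> 1 / E + 1"
        using avg_cos_bound[OF d0, of "\<lambda>i. u i + (\<Sum>k<d. w i k * g k)"] avg_cos_bound[OF d0, of u] E0
        by (intro add_mono divide_right_mono) auto
      finally show ?thesis .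
    qed
    have Zint: "integrable (gauss_space d) (\<lambda>g. (Z g)\<^sup>2)"
    proof (rule integrable_const_bound[where B="(1/E+1)\<^sup>2"])
      show "AE g in gauss_space d. norm ((Z g)\<^sup>2) \<le> (1/E+1)\<^sup>2"
      proof (intro AE_I2)
        fix g
        have "\<bar>Z g\<bar>\<^sup>2 \<le> (1/E+1)\<^sup>2" using Zb[of g] by (intro power_mono) auto
        thus "norm ((Z g)\<^sup>2) \<le> (1/E+1)\<^sup>2" by simp
      qed
    qed (use Zmeas in simp)
    define B where "B = {g\<in>space (gauss_space d). 1/16 \<le> (Z g)\<^sup>2}"
    have Bsets: "B \<in> sets (gauss_space d)" unfolding B_def using Zmeas by measurable
    have markov: "measure (gauss_space d) B \<le> (\<integral>g. (Z g)\<^sup>2 \<partial>gauss_space d) / (1/16)"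
      unfolding B_def by (rule integral_Markov_inequality_measure[OF Zint]) auto
    define G0 where "G0 = {g \<in> space (gauss_space d).
              1/2 * exp (- z\<^sup>2 * \<sigma>\<^sup>2 / 2) \<le> phi_hat d \<theta> \<sigma> A z g
              \<and> phi_hat d \<theta> \<sigma> A z g \<le> 3/2 * exp (- z\<^sup>2 * \<sigma>\<^sup>2 / 2)}"
    have G0sets: "G0 \<in> sets (gauss_space d)"
      unfolding G0_def using phi_hat_meas[of d \<theta> \<sigma> A z] by measurable
    have mbound: "0 \<le> 1 - (1/real d) * (\<Sum>i<d. cos (u i))" "1 - (1/real d) * (\<Sum>i<d. cos (u i)) \<le> 1/4"
    proof -
      have eq: "1 - (1/real d) * (\<Sum>i<d. cos (u i)) = (\<Sum>i<d. 1 - cos (u i)) / real d"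
        using d0 by (simp add: sum_subtractf field_simps)
      show "0 \<le> 1 - (1/real d) * (\<Sum>i<d. cos (u i))" unfolding eq using S1 by simp
      have "(\<Sum>i<d. 1 - cos (u i)) / real d \<le> (2 * real s) / real d"
        using S2 d0 by (intro divide_right_mono) auto
      also have "\<dots> \<le> 1/4" using s8 d0 by (simp add: field_simps)
      finally show "1 - (1/real d) * (\<Sum>i<d. cos (u i)) \<le> 1/4" unfolding eq .
    qed
    have sub: "space (gauss_space d) - G0 \<subseteq> B"
    proof
      fix g assume g: "g \<in> space (gauss_space d) - G0"
      define a where "a = (1/real d) * (\<Sum>i<d. cos (u i + (\<Sum>k<d. w i k * g k))) / E"
      define m where "m = (1/real d) * (\<Sum>i<d. cos (u i))"
      have Zg: "Z g = a - m" by (simp add: Z_def a_def m_def E_def)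
      have ph: "phi_hat d \<theta> \<sigma> A z g = a * E" using E0 by (simp add: phi a_def)
      have "\<not> (1/2 * E \<le> a * E \<and> a * E \<le> 3/2 * E)"
        using g ph unfolding G0_def expE by auto
      hence "a < 1/2 \<or> a > 3/2" using E0 by auto
      hence "\<bar>a - m\<bar> \<ge> 1/4" using mbound unfolding m_def[symmetric] by auto
      hence "(1/4)\<^sup>2 \<le> \<bar>a - m\<bar>\<^sup>2" by (intro power_mono) auto
      hence "1/16 \<le> (Z g)\<^sup>2" unfolding Zg by (simp add: power2_eq_square)
      thus "g \<in> B" using g unfolding B_def by auto
    qed
    have "measure (gauss_space d) G0 = 1 - measure (gauss_space d) (space (gauss_space d) - G0)"
      using prob_compl[OF G0sets] by simp
    also have "\<dots> \<ge> 1 - measure (gauss_space d) B"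
      using finite_measure_mono[OF sub Bsets] by simp
    finally have "measure (gauss_space d) G0 \<ge> 1 - measure (gauss_space d) B" .
    moreover have "measure (gauss_space d) B \<le> 32 * F\<^sup>2 / (real d)\<^sup>2 * max (real s / F) 1 * exp T"
    proof -
      have "measure (gauss_space d) B \<le> 16 * ((1/(real d)\<^sup>2) * ((F\<^sup>2 + s * F) * exp T))"
        using markov M2b by simp
      also have "\<dots> \<le> 16 * ((1/(real d)\<^sup>2) * (2 * (F\<^sup>2 * max (s / F) 1) * exp T))"
        using FM by (intro mult_left_mono mult_right_mono) auto
      also have "\<dots> = 32 * F\<^sup>2 / (real d)\<^sup>2 * max (real s / F) 1 * exp T" by simp
      finally show ?thesis .
    qed
    ultimately show ?thesis unfolding G0_def F_def eT by simp
  qed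
  show ?thesis using P1 P2 by blast
qed

theorem lemma6:
  shows "\<exists>C>0. \<forall>(d::nat) (s::nat) (\<sigma>::real) (\<theta>::nat \<Rightarrow> real) (A::nat \<Rightarrow> nat \<Rightarrow> real) (c::real) (z::real).
     1 \<le> s \<longrightarrow> s \<le> d \<longrightarrow> \<sigma> > 0 \<longrightarrow> \<theta> \<in> B0 s d \<longrightarrow> c > 0 \<longrightarrow> (\<forall>i<d. cov_of d A i i \<ge> c) \<longrightarrow>
     ((\<integral>g. (phi_hat d \<theta> \<sigma> A z g / exp (- z\<^sup>2 * \<sigma>\<^sup>2 / 2) - 1)\<^sup>2 \<partial>gauss_space d)
        \<le> C * ((real s)\<^sup>2 / (real d)\<^sup>2
              + (frob_tilde d A)\<^sup>2 / (real d)\<^sup>2 * max (real s / frob_tilde d A) 1 * exp (z\<^sup>2 * \<sigma>\<^sup>2))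
      \<and> (real s \<le> real d / 8 \<longrightarrow>
         measure (gauss_space d)
           {g \<in> space (gauss_space d).
              1/2 * exp (- z\<^sup>2 * \<sigma>\<^sup>2 / 2) \<le> phi_hat d \<theta> \<sigma> A z g
              \<and> phi_hat d \<theta> \<sigma> A z g \<le> 3/2 * exp (- z\<^sup>2 * \<sigma>\<^sup>2 / 2)}
         \<ge> 1 - C * (frob_tilde d A)\<^sup>2 / (real d)\<^sup>2 * max (real s / frob_tilde d A) 1 * exp (z\<^sup>2 * \<sigma>\<^sup>2)))"
  apply (rule exI[of _ 32])
  using main_bounds by auto

end
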